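(* Let $\alpha\in\mathbb{R}\setminus\{0\}$ and let $A=\{(x_1,y_1),\dots,(x_\ell,y_\ell)\}\subset\mathbb{R}_+^{m+n}$. Then: (a) $T_{\mathbb Q_\alpha,C}(A)$ and $T_{\mathbb Q_\alpha,V}(A)$ are closed; (b) $T_{\mathbb Q_\alpha,C}(A)$ and $T_{\mathbb Q_\alpha,V}(A)$ are $\mathbb Q_\alpha$-convex; (c) $T_{\mathbb Q_\alpha,C}(A)$ and $T_{\mathbb Q_\alpha,V}(A)$ satisfy free disposal, i.e. $T=(T+K)\cap\mathbb{R}_+^{m+n}$ for each of them; (d) $T_{\mathbb Q_\alpha,C}(A)$ is graph-translation homothetic: for all $(x,y)\in T_{\mathbb Q_\alpha,C}(A)$ and all $\delta\in\mathbb{R}$ with $(x+\delta1\!\!1_m,y+\delta1\!\!1_n)\ge0$, one has $(x+\delta1\!\!1_m,y+\delta1\!\!1_n)\in T_{\mathbb Q_\alpha,C}(A)$.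
   Context: $K=\mathbb{R}_+^m\times(-\mathbb{R}_+^n)$; $1\!\!1_m$ is the vector of ones; $\mathbf e$, $\mathbf{ln}$ are componentwise. $\mathbb M_\alpha=\mathbb{R}\cup\{-\infty\}$ if $\alpha>0$, $\mathbb M_\alpha=\mathbb{R}\cup\{+\infty\}$ if $\alpha<0$, with $e^{\alpha t}=0$ when $\alpha t=-\infty$ and $\ln0=-\infty$. The quantized technologies are $$T_{\mathbb Q_\alpha,C}(A)=\Big\{(x,y)\in\mathbb{R}_+^{m+n}: x\ge\tfrac1\alpha\mathbf{ln}\Big(\sum_{k}e^{\alpha t_k}\mathbf e^{\alpha x_k}\Big),\ y\le\tfrac1\alpha\mathbf{ln}\Big(\sum_k e^{\alpha t_k}\mathbf e^{\alpha y_k}\Big)\text{ for some }t\in\mathbb M_\alpha^\ell\Big\},$$ and $T_{\mathbb Q_\alpha,V}(A)$ is defined in the same way with the additional constraint $\frac1\alpha\ln\big(\sum_k e^{\alpha t_k}\big)=0$. A set $C\subset\mathbb M_\alpha^{d}$ is $\mathbb Q_\alpha$-convex if $\{\mathbf e^{\alpha z}:z\in C\}$ is convex. *)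

theory Defs
  imports "HOL-Analysis.Analysis" "HOL-Library.Extended_Real"
begin

definition Malpha :: "real \<Rightarrow> ereal set" where
  "Malpha \<alpha> = (if \<alpha> > 0 then {t. t \<noteq> \<infinity>} else {t. t \<noteq> -\<infinity>})"

definition qexp :: "real \<Rightarrow> ereal \<Rightarrow> real" where
  "qexp \<alpha> t = (if ereal \<alpha> * t = -\<infinity> then 0 else exp (real_of_ereal (ereal \<alpha> * t)))"

definition qln :: "real \<Rightarrow> real \<Rightarrow> ereal" where
  "qln \<alpha> s = (if s = 0 then ereal (1 / \<alpha>) * (-\<infinity>) else ereal (ln s / \<alpha>))"

definition TQC :: "real \<Rightarrow> nat \<Rightarrow> (nat \<Rightarrow> real^'m) \<Rightarrow> (nat \<Rightarrow> real^'n)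
    \<Rightarrow> ((real^'m) \<times> (real^'n)) set" where
  "TQC \<alpha> l X Y = {(x, y). (\<forall>i. 0 \<le> x $ i) \<and> (\<forall>j. 0 \<le> y $ j) \<and>
     (\<exists>t :: nat \<Rightarrow> ereal. (\<forall>k<l. t k \<in> Malpha \<alpha>) \<and>
        (\<forall>i. ereal (x $ i) \<ge> qln \<alpha> (\<Sum>k<l. qexp \<alpha> (t k) * exp (\<alpha> * (X k $ i)))) \<and>
        (\<forall>j. ereal (y $ j) \<le> qln \<alpha> (\<Sum>k<l. qexp \<alpha> (t k) * exp (\<alpha> * (Y k $ j)))))}"

definition TQV :: "real \<Rightarrow> nat \<Rightarrow> (nat \<Rightarrow> real^'m) \<Rightarrow> (nat \<Rightarrow> real^'n)
    \<Rightarrow> ((real^'m) \<times> (real^'n)) set" where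
  "TQV \<alpha> l X Y = {(x, y). (\<forall>i. 0 \<le> x $ i) \<and> (\<forall>j. 0 \<le> y $ j) \<and>
     (\<exists>t :: nat \<Rightarrow> ereal. (\<forall>k<l. t k \<in> Malpha \<alpha>) \<and>
        qln \<alpha> (\<Sum>k<l. qexp \<alpha> (t k)) = 0 \<and>
        (\<forall>i. ereal (x $ i) \<ge> qln \<alpha> (\<Sum>k<l. qexp \<alpha> (t k) * exp (\<alpha> * (X k $ i)))) \<and>
        (\<forall>j. ereal (y $ j) \<le> qln \<alpha> (\<Sum>k<l. qexp \<alpha> (t k) * exp (\<alpha> * (Y k $ j)))))}"

definition qconvex :: "real \<Rightarrow> ((real^'m) \<times> (real^'n)) set \<Rightarrow> bool" where
  "qconvex \<alpha> T = convex ((\<lambda>(x, y). ((\<chi> i. exp (\<alpha> * (x $ i))), (\<chi> j. exp (\<alpha> * (y $ j))))) ` T)"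

definition free_disposal :: "((real^'m) \<times> (real^'n)) set \<Rightarrow> bool" where
  "free_disposal T \<longleftrightarrow> T =
     {(x + u, y - v) | x y u v. (x, y) \<in> T \<and> (\<forall>i. 0 \<le> u $ i) \<and> (\<forall>j. 0 \<le> v $ j)}
     \<inter> {(x, y). (\<forall>i. 0 \<le> x $ i) \<and> (\<forall>j. 0 \<le> y $ j)}"

definition graph_translation_homothetic :: "((real^'m) \<times> (real^'n)) set \<Rightarrow> bool" where
  "graph_translation_homothetic T \<longleftrightarrow>
     (\<forall>x y (\<delta>::real). (x, y) \<in> T \<and> (\<forall>i. 0 \<le> x $ i + \<delta>) \<and> (\<forall>j. 0 \<le> y $ j + \<delta>) \<longrightarrow>
        (x + (\<chi> i. \<delta>), y + (\<chi> j. \<delta>)) \<in> T)"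

end

theory Submission
  imports Defs
begin

lemma qln_ge:
  assumes a: "\<alpha> \<noteq> 0" and S: "S \<ge> 0"
  shows "(qln \<alpha> S \<le> ereal x) \<longleftrightarrow> 0 \<le> \<alpha> * (exp (\<alpha> * x) - S)"
proof (cases "S = 0")
  case True
  then show ?thesis using a
    by (cases "\<alpha> > 0") (auto simp: qln_def mult_le_0_iff zero_le_mult_iff)
next
  case False
  then have Sp: "S > 0" using S by simp
  have "(ln S / \<alpha> \<le> x) \<longleftrightarrow> 0 \<le> \<alpha> * (exp (\<alpha> * x) - S)"
  proof (cases "\<alpha> > 0")
    case True
    have "(ln S / \<alpha> \<le> x) \<longleftrightarrow> ln S \<le> \<alpha> * x" using True by (simp add: divide_le_eq mult.commute)
    also have "\<dots> \<longleftrightarrow> S \<le> exp (\<alpha> * x)" using Sp by (metis exp_le_cancel_iff exp_ln)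
    finally show ?thesis using True by (simp add: zero_le_mult_iff)
  next
    case False
    then have n: "\<alpha> < 0" using a by simp
    have "(ln S / \<alpha> \<le> x) \<longleftrightarrow> \<alpha> * x \<le> ln S" using n by (simp add: divide_le_eq mult.commute)
    also have "\<dots> \<longleftrightarrow> exp (\<alpha> * x) \<le> S" using Sp by (metis exp_le_cancel_iff exp_ln)
    finally show ?thesis using n by (simp add: zero_le_mult_iff)
  qed
  then show ?thesis using False by (simp add: qln_def)
qed

lemma qln_le:
  assumes a: "\<alpha> \<noteq> 0" and S: "S \<ge> 0"
  shows "(ereal y \<le> qln \<alpha> S) \<longleftrightarrow> 0 \<le> \<alpha> * (S - exp (\<alpha> * y))"
proof (cases "S = 0")
  case True
  then show ?thesis using a
    by (cases "\<alpha> > 0") (auto simp: qln_def mult_le_0_iff zero_le_mult_iff)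
next
  case False
  then have Sp: "S > 0" using S by simp
  have "(y \<le> ln S / \<alpha>) \<longleftrightarrow> 0 \<le> \<alpha> * (S - exp (\<alpha> * y))"
  proof (cases "\<alpha> > 0")
    case True
    have "(y \<le> ln S / \<alpha>) \<longleftrightarrow> \<alpha> * y \<le> ln S" using True by (simp add: le_divide_eq mult.commute)
    also have "\<dots> \<longleftrightarrow> exp (\<alpha> * y) \<le> S" using Sp by (metis exp_le_cancel_iff exp_ln)
    finally show ?thesis using True by (simp add: zero_le_mult_iff)
  next
    case False
    then have n: "\<alpha> < 0" using a by simp
    have "(y \<le> ln S / \<alpha>) \<longleftrightarrow> ln S \<le> \<alpha> * y" using n by (simp add: le_divide_eq mult.commute)
    also have "\<dots> \<longleftrightarrow> S \<le> exp (\<alpha> * y)" using Sp by (metis exp_le_cancel_iff exp_ln)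
    finally show ?thesis using n by (simp add: zero_le_mult_iff)
  qed
  then show ?thesis using False by (simp add: qln_def)
qed

lemma qln_eq0:
  assumes a: "\<alpha> \<noteq> 0" and S: "S \<ge> 0"
  shows "qln \<alpha> S = 0 \<longleftrightarrow> S = 1"
proof (cases "S = 0")
  case True
  then show ?thesis using a
    by (cases "\<alpha> > 0") (auto simp: qln_def)
next
  case False
  then show ?thesis using a S by (auto simp: qln_def zero_ereal_def)
qed

lemma qexp_nonneg: "qexp \<alpha> t \<ge> 0"
  by (simp add: qexp_def)

lemma qexp_surj:
  assumes a: "\<alpha> \<noteq> 0" and c: "c \<ge> 0"
  shows "\<exists>t\<in>Malpha \<alpha>. qexp \<alpha> t = c"
proof (cases "c = 0")
  case True
  show ?thesis
  proof (cases "\<alpha> > 0")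
    case True
    then show ?thesis using \<open>c = 0\<close>
      by (intro bexI[of _ "-\<infinity>"]) (auto simp: qexp_def Malpha_def)
  next
    case False
    then show ?thesis using \<open>c = 0\<close> a
      by (intro bexI[of _ "\<infinity>"]) (auto simp: qexp_def Malpha_def)
  qed
next
  case False
  then have "c > 0" using c by simp
  then show ?thesis using a
    by (intro bexI[of _ "ereal (ln c / \<alpha>)"]) (auto simp: qexp_def Malpha_def)
qed

definition G :: "real \<Rightarrow> nat \<Rightarrow> (nat \<Rightarrow> real^'m) \<Rightarrow> (nat \<Rightarrow> real^'n) \<Rightarrow> bool
    \<Rightarrow> ((real^'m) \<times> (real^'n)) set" where
  "G \<alpha> l X Y V = {(x, y). (\<forall>i. 0 \<le> x $ i) \<and> (\<forall>j. 0 \<le> y $ j) \<and>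
     (\<exists>c :: nat \<Rightarrow> real. (\<forall>k<l. 0 \<le> c k) \<and> (V \<longrightarrow> (\<Sum>k<l. c k) = 1) \<and>
        (\<forall>i. 0 \<le> \<alpha> * (exp (\<alpha> * x $ i) - (\<Sum>k<l. c k * exp (\<alpha> * (X k $ i))))) \<and>
        (\<forall>j. 0 \<le> \<alpha> * ((\<Sum>k<l. c k * exp (\<alpha> * (Y k $ j))) - exp (\<alpha> * y $ j))))}"

lemma TQC_G: assumes a: "\<alpha> \<noteq> 0" shows "TQC \<alpha> l X Y = G \<alpha> l X Y False"
proof (intro set_eqI iffI)
  fix p assume "p \<in> TQC \<alpha> l X Y"
  then obtain x y t where p: "p = (x, y)" "\<forall>i. 0 \<le> x $ i" "\<forall>j. 0 \<le> y $ j"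
    "\<forall>i. ereal (x $ i) \<ge> qln \<alpha> (\<Sum>k<l. qexp \<alpha> (t k) * exp (\<alpha> * (X k $ i)))"
    "\<forall>j. ereal (y $ j) \<le> qln \<alpha> (\<Sum>k<l. qexp \<alpha> (t k) * exp (\<alpha> * (Y k $ j)))"
    unfolding TQC_def by blast
  have nn: "\<And>Z. (\<Sum>k<l. qexp \<alpha> (t k) * exp (\<alpha> * Z k)) \<ge> 0"
    by (intro sum_nonneg mult_nonneg_nonneg qexp_nonneg) auto
  show "p \<in> G \<alpha> l X Y False" unfolding G_def using p qln_ge[OF a nn] qln_le[OF a nn]
    by (auto intro!: exI[of _ "\<lambda>k. qexp \<alpha> (t k)"] qexp_nonneg)
next
  fix p assume "p \<in> G \<alpha> l X Y False"
  then obtain x y c where p: "p = (x, y)" "\<forall>i. 0 \<le> x $ i" "\<forall>j. 0 \<le> y $ j" "\<forall>k<l. 0 \<le> c k"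
     "\<forall>i. 0 \<le> \<alpha> * (exp (\<alpha> * x $ i) - (\<Sum>k<l. c k * exp (\<alpha> * (X k $ i))))"
     "\<forall>j. 0 \<le> \<alpha> * ((\<Sum>k<l. c k * exp (\<alpha> * (Y k $ j))) - exp (\<alpha> * y $ j))"
    unfolding G_def by blast
  have "\<forall>k. \<exists>t. k < l \<longrightarrow> t \<in> Malpha \<alpha> \<and> qexp \<alpha> t = c k"
    using qexp_surj[OF a] p(4) by blast
  then obtain t where t: "\<And>k. k < l \<Longrightarrow> t k \<in> Malpha \<alpha> \<and> qexp \<alpha> (t k) = c k" by metis
  have e: "\<And>Z. (\<Sum>k<l. qexp \<alpha> (t k) * Z k) = (\<Sum>k<l. c k * Z k)"
    by (rule sum.cong) (auto simp: t)
  have nn: "\<And>Z. (\<Sum>k<l. c k * exp (\<alpha> * Z k)) \<ge> 0"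
    using p(4) by (intro sum_nonneg mult_nonneg_nonneg) auto
  show "p \<in> TQC \<alpha> l X Y" unfolding TQC_def using p t qln_ge[OF a nn] qln_le[OF a nn]
    by (auto simp: e intro!: exI[of _ t])
qed

lemma TQV_G: assumes a: "\<alpha> \<noteq> 0" shows "TQV \<alpha> l X Y = G \<alpha> l X Y True"
proof (intro set_eqI iffI)
  fix p assume "p \<in> TQV \<alpha> l X Y"
  then obtain x y t where p: "p = (x, y)" "\<forall>i. 0 \<le> x $ i" "\<forall>j. 0 \<le> y $ j"
    "qln \<alpha> (\<Sum>k<l. qexp \<alpha> (t k)) = 0"
    "\<forall>i. ereal (x $ i) \<ge> qln \<alpha> (\<Sum>k<l. qexp \<alpha> (t k) * exp (\<alpha> * (X k $ i)))"
    "\<forall>j. ereal (y $ j) \<le> qln \<alpha> (\<Sum>k<l. qexp \<alpha> (t k) * exp (\<alpha> * (Y k $ j)))"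
    unfolding TQV_def by blast
  have nn: "\<And>Z. (\<Sum>k<l. qexp \<alpha> (t k) * exp (\<alpha> * Z k)) \<ge> 0"
    by (intro sum_nonneg mult_nonneg_nonneg qexp_nonneg) auto
  have nn2: "(\<Sum>k<l. qexp \<alpha> (t k)) \<ge> 0"
    by (intro sum_nonneg qexp_nonneg)
  show "p \<in> G \<alpha> l X Y True" unfolding G_def using p qln_ge[OF a nn] qln_le[OF a nn] qln_eq0[OF a nn2]
    by (auto intro!: exI[of _ "\<lambda>k. qexp \<alpha> (t k)"] qexp_nonneg)
next
  fix p assume "p \<in> G \<alpha> l X Y True"
  then obtain x y c where p: "p = (x, y)" "\<forall>i. 0 \<le> x $ i" "\<forall>j. 0 \<le> y $ j" "\<forall>k<l. 0 \<le> c k"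
     "(\<Sum>k<l. c k) = 1"
     "\<forall>i. 0 \<le> \<alpha> * (exp (\<alpha> * x $ i) - (\<Sum>k<l. c k * exp (\<alpha> * (X k $ i))))"
     "\<forall>j. 0 \<le> \<alpha> * ((\<Sum>k<l. c k * exp (\<alpha> * (Y k $ j))) - exp (\<alpha> * y $ j))"
    unfolding G_def by blast
  have "\<forall>k. \<exists>t. k < l \<longrightarrow> t \<in> Malpha \<alpha> \<and> qexp \<alpha> t = c k"
    using qexp_surj[OF a] p(4) by blast
  then obtain t where t: "\<And>k. k < l \<Longrightarrow> t k \<in> Malpha \<alpha> \<and> qexp \<alpha> (t k) = c k" by metis
  have e: "\<And>Z. (\<Sum>k<l. qexp \<alpha> (t k) * Z k) = (\<Sum>k<l. c k * Z k)"
    by (rule sum.cong) (auto simp: t)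
  have e2: "(\<Sum>k<l. qexp \<alpha> (t k)) = (\<Sum>k<l. c k)"
    by (rule sum.cong) (auto simp: t)
  have nn: "\<And>Z. (\<Sum>k<l. c k * exp (\<alpha> * Z k)) \<ge> 0"
    using p(4) by (intro sum_nonneg mult_nonneg_nonneg) auto
  have nn2: "(\<Sum>k<l. c k) \<ge> 0" using p(5) by simp
  show "p \<in> TQV \<alpha> l X Y" unfolding TQV_def using p t qln_ge[OF a nn] qln_le[OF a nn] qln_eq0[OF a nn2]
    by (auto simp: e e2 intro!: exI[of _ t])
qed

lemma aexp_mono: fixes \<alpha> a b :: real shows "a \<le> b \<Longrightarrow> \<alpha> * exp (\<alpha> * a) \<le> \<alpha> * exp (\<alpha> * b)"
proof (cases "\<alpha> \<ge> 0")
  case True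
  assume "a \<le> b"
  then have "\<alpha> * a \<le> \<alpha> * b" using True by (simp add: mult_left_mono)
  then show ?thesis using True by (metis exp_le_cancel_iff mult_left_mono)
next
  case False
  assume "a \<le> b"
  then have "\<alpha> * b \<le> \<alpha> * a" using False by (simp add: mult_left_mono_neg)
  then show ?thesis using False by (simp add: mult_left_mono_neg)
qed

lemma G_fd: "free_disposal (G \<alpha> l X Y V)"
  unfolding free_disposal_def
proof (intro set_eqI iffI)
  fix p assume p: "p \<in> G \<alpha> l X Y V"
  then obtain x y where "p = (x, y)" by (cases p)
  moreover have "p = (x + 0, y - 0)" using \<open>p = (x, y)\<close> by simp
  ultimately show "p \<in> {(x + u, y - v) |x y u v. (x, y) \<in> G \<alpha> l X Y V \<and> (\<forall>i. 0 \<le> u $ i) \<and> (\<forall>j. 0 \<le> v $ j)} \<inter>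
          {(x, y). (\<forall>i. 0 \<le> x $ i) \<and> (\<forall>j. 0 \<le> y $ j)}"
  proof (intro IntI CollectI exI conjI)
    show "p = (x + 0, y - 0)" by fact
    show "(x, y) \<in> G \<alpha> l X Y V" using p \<open>p = (x, y)\<close> by simp
  qed (use p \<open>p = (x, y)\<close> in \<open>auto simp: G_def\<close>)
next
  fix p assume "p \<in> {(x + u, y - v) |x y u v. (x, y) \<in> G \<alpha> l X Y V \<and> (\<forall>i. 0 \<le> u $ i) \<and> (\<forall>j. 0 \<le> v $ j)} \<inter>
          {(x, y). (\<forall>i. 0 \<le> x $ i) \<and> (\<forall>j. 0 \<le> y $ j)}"
  then obtain x y u v c where p: "p = (x + u, y - v)" "\<forall>i. 0 \<le> u $ i" "\<forall>j. 0 \<le> v $ j"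
    "\<forall>i. 0 \<le> (x + u) $ i" "\<forall>j. 0 \<le> (y - v) $ j" "\<forall>k<l. 0 \<le> c k" "V \<longrightarrow> (\<Sum>k<l. c k) = 1"
     "\<forall>i. 0 \<le> \<alpha> * (exp (\<alpha> * x $ i) - (\<Sum>k<l. c k * exp (\<alpha> * (X k $ i))))"
     "\<forall>j. 0 \<le> \<alpha> * ((\<Sum>k<l. c k * exp (\<alpha> * (Y k $ j))) - exp (\<alpha> * y $ j))"
    unfolding G_def by blast
  have 1: "0 \<le> \<alpha> * (exp (\<alpha> * (x + u) $ i) - (\<Sum>k<l. c k * exp (\<alpha> * (X k $ i))))" for i
  proof -
    have "\<alpha> * exp (\<alpha> * x $ i) \<le> \<alpha> * exp (\<alpha> * (x + u) $ i)"
      using p(2) by (intro aexp_mono) auto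
    then show ?thesis using p(8)[rule_format, of i] by (simp add: right_diff_distrib)
  qed
  have 2: "0 \<le> \<alpha> * ((\<Sum>k<l. c k * exp (\<alpha> * (Y k $ j))) - exp (\<alpha> * (y - v) $ j))" for j
  proof -
    have "\<alpha> * exp (\<alpha> * (y - v) $ j) \<le> \<alpha> * exp (\<alpha> * y $ j)"
      using p(3) by (intro aexp_mono) auto
    then show ?thesis using p(9)[rule_format, of j] by (simp add: right_diff_distrib)
  qed
  show "p \<in> G \<alpha> l X Y V" unfolding G_def using p 1 2 by blast
qed

lemma G_gth: "graph_translation_homothetic (G \<alpha> l X Y False)"
  unfolding graph_translation_homothetic_def
proof (intro allI impI)
  fix x y \<delta>
  assume "(x, y) \<in> G \<alpha> l X Y False \<and> (\<forall>i. 0 \<le> x $ i + \<delta>) \<and> (\<forall>j. 0 \<le> y $ j + \<delta>)"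
  then obtain c where p: "\<forall>i. 0 \<le> x $ i + \<delta>" "\<forall>j. 0 \<le> y $ j + \<delta>" "\<forall>k<l. 0 \<le> c k"
     "\<forall>i. 0 \<le> \<alpha> * (exp (\<alpha> * x $ i) - (\<Sum>k<l. c k * exp (\<alpha> * (X k $ i))))"
     "\<forall>j. 0 \<le> \<alpha> * ((\<Sum>k<l. c k * exp (\<alpha> * (Y k $ j))) - exp (\<alpha> * y $ j))"
    unfolding G_def by blast
  define e where "e = exp (\<alpha> * \<delta>)"
  have e: "e > 0" by (simp add: e_def)
  have ex: "exp (\<alpha> * (z + \<delta>)) = e * exp (\<alpha> * z)" for z
    by (simp add: e_def distrib_left exp_add)
  have s: "(\<Sum>k<l. e * c k * Z k) = e * (\<Sum>k<l. c k * Z k)" for Z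
    by (simp add: sum_distrib_left mult.assoc)
  have 1: "0 \<le> \<alpha> * (exp (\<alpha> * (x $ i + \<delta>)) - (\<Sum>k<l. e * c k * exp (\<alpha> * (X k $ i))))" for i
  proof -
    have "\<alpha> * (exp (\<alpha> * (x $ i + \<delta>)) - (\<Sum>k<l. e * c k * exp (\<alpha> * (X k $ i))))
       = e * (\<alpha> * (exp (\<alpha> * x $ i) - (\<Sum>k<l. c k * exp (\<alpha> * (X k $ i)))))"
      by (simp only: ex s) (simp add: algebra_simps)
    then show ?thesis using p(4) e by (metis less_imp_le mult_nonneg_nonneg)
  qed
  have 2: "0 \<le> \<alpha> * ((\<Sum>k<l. e * c k * exp (\<alpha> * (Y k $ j))) - exp (\<alpha> * (y $ j + \<delta>)))" for j
  proof -
    have "\<alpha> * ((\<Sum>k<l. e * c k * exp (\<alpha> * (Y k $ j))) - exp (\<alpha> * (y $ j + \<delta>)))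
       = e * (\<alpha> * ((\<Sum>k<l. c k * exp (\<alpha> * (Y k $ j))) - exp (\<alpha> * y $ j)))"
      by (simp only: ex s) (simp add: algebra_simps)
    then show ?thesis using p(5) e by (metis less_imp_le mult_nonneg_nonneg)
  qed
  show "(x + (\<chi> i. \<delta>), y + (\<chi> j. \<delta>)) \<in> G \<alpha> l X Y False"
    unfolding G_def using p 1 2 e
    by (auto intro!: exI[of _ "\<lambda>k. e * c k"])
qed

lemma mix_pos: fixes \<alpha> a b u v :: real
  assumes "0 \<le> u" "0 \<le> v" "u + v = 1"
  shows "u * exp (\<alpha> * a) + v * exp (\<alpha> * b) > 0"
proof (cases "u = 0")
  case True then show ?thesis using assms by simp
next
  case False then have "u > 0" using assms by simp
  then have "u * exp (\<alpha> * a) > 0" by simp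
  moreover have "v * exp (\<alpha> * b) \<ge> 0" using assms by simp
  ultimately show ?thesis by linarith
qed

lemma mix_exp: fixes \<alpha> a b u v :: real
  assumes "\<alpha> \<noteq> 0" "0 \<le> u" "0 \<le> v" "u + v = 1"
  shows "exp (\<alpha> * (ln (u * exp (\<alpha> * a) + v * exp (\<alpha> * b)) / \<alpha>)) = u * exp (\<alpha> * a) + v * exp (\<alpha> * b)"
  using mix_pos[OF assms(2-4), of \<alpha> a b] assms(1) by simp

lemma mix_nonneg: fixes \<alpha> a b u v :: real
  assumes "\<alpha> \<noteq> 0" "0 \<le> u" "0 \<le> v" "u + v = 1" "0 \<le> a" "0 \<le> b"
  shows "0 \<le> ln (u * exp (\<alpha> * a) + v * exp (\<alpha> * b)) / \<alpha>"
proof (cases "\<alpha> > 0")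
  case True
  have "1 \<le> exp (\<alpha> * a)" "1 \<le> exp (\<alpha> * b)" using True assms by auto
  then have "u * 1 + v * 1 \<le> u * exp (\<alpha> * a) + v * exp (\<alpha> * b)"
    using assms by (intro add_mono mult_left_mono) auto
  then have "0 \<le> ln (u * exp (\<alpha> * a) + v * exp (\<alpha> * b))" using assms by simp
  then show ?thesis using True by simp
next
  case False
  then have n: "\<alpha> < 0" using assms by simp
  have "exp (\<alpha> * a) \<le> 1" "exp (\<alpha> * b) \<le> 1" using n assms by (auto simp: mult_nonpos_nonneg)
  then have "u * exp (\<alpha> * a) + v * exp (\<alpha> * b) \<le> u * 1 + v * 1"
    using assms by (intro add_mono mult_left_mono) auto
  then have "ln (u * exp (\<alpha> * a) + v * exp (\<alpha> * b)) \<le> 0" using assms mix_pos[OF assms(2-4), of \<alpha> a b] by simp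
  then show ?thesis using n by (simp add: divide_nonpos_neg)
qed

lemma G_qconvex: assumes a: "\<alpha> \<noteq> 0" shows "qconvex \<alpha> (G \<alpha> l X Y V)"
  unfolding qconvex_def convex_def
proof (intro ballI allI impI)
  let ?E = "(\<lambda>(x, y). ((\<chi> i. exp (\<alpha> * (x $ i))) :: real^'a, (\<chi> j. exp (\<alpha> * (y $ j))) :: real^'b))"
  fix p q and u v :: real
  assume pq: "p \<in> ?E ` G \<alpha> l X Y V" "q \<in> ?E ` G \<alpha> l X Y V" and u: "0 \<le> u" and v: "0 \<le> v" and uv1: "u + v = 1"
  from pq obtain x1 y1 x2 y2 where pe: "p = ?E (x1, y1)" "q = ?E (x2, y2)"
    and m: "(x1, y1) \<in> G \<alpha> l X Y V" "(x2, y2) \<in> G \<alpha> l X Y V" by auto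
  from m(1) obtain c1 where p1: "\<forall>i. 0 \<le> x1 $ i" "\<forall>j. 0 \<le> y1 $ j" "\<forall>k<l. 0 \<le> c1 k" "V \<longrightarrow> (\<Sum>k<l. c1 k) = 1"
     "\<forall>i. 0 \<le> \<alpha> * (exp (\<alpha> * x1 $ i) - (\<Sum>k<l. c1 k * exp (\<alpha> * (X k $ i))))"
     "\<forall>j. 0 \<le> \<alpha> * ((\<Sum>k<l. c1 k * exp (\<alpha> * (Y k $ j))) - exp (\<alpha> * y1 $ j))"
    unfolding G_def by blast
  from m(2) obtain c2 where p2: "\<forall>i. 0 \<le> x2 $ i" "\<forall>j. 0 \<le> y2 $ j" "\<forall>k<l. 0 \<le> c2 k" "V \<longrightarrow> (\<Sum>k<l. c2 k) = 1"
     "\<forall>i. 0 \<le> \<alpha> * (exp (\<alpha> * x2 $ i) - (\<Sum>k<l. c2 k * exp (\<alpha> * (X k $ i))))"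
     "\<forall>j. 0 \<le> \<alpha> * ((\<Sum>k<l. c2 k * exp (\<alpha> * (Y k $ j))) - exp (\<alpha> * y2 $ j))"
    unfolding G_def by blast
  define x3 :: "real^'a" where "x3 = (\<chi> i. ln (u * exp (\<alpha> * x1 $ i) + v * exp (\<alpha> * x2 $ i)) / \<alpha>)"
  define y3 :: "real^'b" where "y3 = (\<chi> j. ln (u * exp (\<alpha> * y1 $ j) + v * exp (\<alpha> * y2 $ j)) / \<alpha>)"
  define c3 where "c3 = (\<lambda>k. u * c1 k + v * c2 k)"
  have ex: "exp (\<alpha> * x3 $ i) = u * exp (\<alpha> * x1 $ i) + v * exp (\<alpha> * x2 $ i)" for i
    unfolding x3_def using mix_exp[OF a u v uv1] by simp
  have ey: "exp (\<alpha> * y3 $ j) = u * exp (\<alpha> * y1 $ j) + v * exp (\<alpha> * y2 $ j)" for j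
    unfolding y3_def using mix_exp[OF a u v uv1] by simp
  have sc: "(\<Sum>k<l. c3 k * Z k) = u * (\<Sum>k<l. c1 k * Z k) + v * (\<Sum>k<l. c2 k * Z k)" for Z
    by (simp add: c3_def sum.distrib sum_distrib_left mult.assoc distrib_right)
  have "(x3, y3) \<in> G \<alpha> l X Y V"
  proof -
    have A: "0 \<le> x3 $ i" for i unfolding x3_def using mix_nonneg[OF a u v uv1] p1 p2 by simp
    have B: "0 \<le> y3 $ j" for j unfolding y3_def using mix_nonneg[OF a u v uv1] p1 p2 by simp
    have C: "\<forall>k<l. 0 \<le> c3 k" using p1 p2 u v by (simp add: c3_def)
    have D: "V \<longrightarrow> (\<Sum>k<l. c3 k) = 1" 
    proof
      assume V
      have "(\<Sum>k<l. c3 k) = u * (\<Sum>k<l. c1 k) + v * (\<Sum>k<l. c2 k)"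
        by (simp add: c3_def sum.distrib sum_distrib_left)
      then show "(\<Sum>k<l. c3 k) = 1" using p1(4) p2(4) uv1 \<open>V\<close> by simp
    qed
    have E: "0 \<le> \<alpha> * (exp (\<alpha> * x3 $ i) - (\<Sum>k<l. c3 k * exp (\<alpha> * X k $ i)))" for i
    proof -
      have "\<alpha> * (exp (\<alpha> * x3 $ i) - (\<Sum>k<l. c3 k * exp (\<alpha> * X k $ i))) =
        u * (\<alpha> * (exp (\<alpha> * x1 $ i) - (\<Sum>k<l. c1 k * exp (\<alpha> * (X k $ i))))) +
        v * (\<alpha> * (exp (\<alpha> * x2 $ i) - (\<Sum>k<l. c2 k * exp (\<alpha> * (X k $ i)))))"
        by (simp only: ex sc) (simp add: algebra_simps)
      then show ?thesis using p1(5) p2(5) u v by (simp only:) (rule add_nonneg_nonneg; rule mult_nonneg_nonneg; simp)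
    qed
    have F: "0 \<le> \<alpha> * ((\<Sum>k<l. c3 k * exp (\<alpha> * Y k $ j)) - exp (\<alpha> * y3 $ j))" for j
    proof -
      have "\<alpha> * ((\<Sum>k<l. c3 k * exp (\<alpha> * Y k $ j)) - exp (\<alpha> * y3 $ j)) =
        u * (\<alpha> * ((\<Sum>k<l. c1 k * exp (\<alpha> * (Y k $ j))) - exp (\<alpha> * y1 $ j))) +
        v * (\<alpha> * ((\<Sum>k<l. c2 k * exp (\<alpha> * (Y k $ j))) - exp (\<alpha> * y2 $ j)))"
        by (simp only: ey sc) (simp add: algebra_simps)
      then show ?thesis using p1(6) p2(6) u v by (simp only:) (rule add_nonneg_nonneg; rule mult_nonneg_nonneg; simp)
    qed
    show ?thesis unfolding G_def using A B C D E F by (intro CollectI case_prodI conjI exI[of _ c3]) auto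
  qed
  moreover have "u *\<^sub>R p + v *\<^sub>R q = ?E (x3, y3)"
    unfolding pe by (simp add: vec_eq_iff ex ey)
  ultimately show "u *\<^sub>R p + v *\<^sub>R q \<in> ?E ` G \<alpha> l X Y V" by blast
qed

lemma term_le_sum: fixes c e :: "nat \<Rightarrow> real"
  assumes "\<forall>k<l. 0 \<le> c k" "k < l" shows "c k * exp (e k) \<le> (\<Sum>k<l. c k * exp (e k))"
  using assms by (intro member_le_sum) auto

lemma G_closed: assumes a: "\<alpha> \<noteq> 0" shows "closed (G \<alpha> l X Y V)"
  unfolding closed_sequential_limits
proof (intro allI impI, elim conjE)
  fix f p assume mem: "\<forall>n. f n \<in> G \<alpha> l X Y V" and lim: "f \<longlonglongrightarrow> p"
  obtain x y where pxy: "p = (x, y)" by (cases p)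
  define xs where "xs n = fst (f n)" for n
  define ys where "ys n = snd (f n)" for n
  have fe: "f n = (xs n, ys n)" for n by (simp add: xs_def ys_def)
  have "\<forall>n. \<exists>c. (\<forall>i. 0 \<le> xs n $ i) \<and> (\<forall>j. 0 \<le> ys n $ j) \<and> (\<forall>k<l. 0 \<le> c k) \<and> (V \<longrightarrow> (\<Sum>k<l. c k) = 1) \<and>
        (\<forall>i. 0 \<le> \<alpha> * (exp (\<alpha> * xs n $ i) - (\<Sum>k<l. c k * exp (\<alpha> * (X k $ i))))) \<and>
        (\<forall>j. 0 \<le> \<alpha> * ((\<Sum>k<l. c k * exp (\<alpha> * (Y k $ j))) - exp (\<alpha> * ys n $ j)))"
    using mem unfolding fe G_def by blast
  then obtain c where c: "\<forall>n. (\<forall>i. 0 \<le> xs n $ i) \<and> (\<forall>j. 0 \<le> ys n $ j) \<and> (\<forall>k<l. 0 \<le> c n k) \<and> (V \<longrightarrow> (\<Sum>k<l. c n k) = 1) \<and>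
        (\<forall>i. 0 \<le> \<alpha> * (exp (\<alpha> * xs n $ i) - (\<Sum>k<l. c n k * exp (\<alpha> * (X k $ i))))) \<and>
        (\<forall>j. 0 \<le> \<alpha> * ((\<Sum>k<l. c n k * exp (\<alpha> * (Y k $ j))) - exp (\<alpha> * ys n $ j)))"
    by (rule choice[THEN exE]) 
  have c1: "\<And>n i. 0 \<le> xs n $ i" and c2: "\<And>n j. 0 \<le> ys n $ j" and c3: "\<And>n k. k < l \<Longrightarrow> 0 \<le> c n k"
    and c4: "\<And>n. V \<Longrightarrow> (\<Sum>k<l. c n k) = 1"
    and c5: "\<And>n i. 0 \<le> \<alpha> * (exp (\<alpha> * xs n $ i) - (\<Sum>k<l. c n k * exp (\<alpha> * (X k $ i))))"
    and c6: "\<And>n j. 0 \<le> \<alpha> * ((\<Sum>k<l. c n k * exp (\<alpha> * (Y k $ j))) - exp (\<alpha> * ys n $ j))"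
    using c by blast+
  have xl: "(\<lambda>n. xs n $ i) \<longlonglongrightarrow> x $ i" for i
    unfolding xs_def using tendsto_vec_nth[OF tendsto_fst[OF lim]] pxy by simp
  have yl: "(\<lambda>n. ys n $ j) \<longlonglongrightarrow> y $ j" for j
    unfolding ys_def using tendsto_vec_nth[OF tendsto_snd[OF lim]] pxy by simp
  have bnd: "bounded ((\<lambda>g. g k) ` range c)" if k: "k \<in> {..<l}" for k
  proof (cases "\<alpha> > 0")
    case True
    fix i0
    have "(\<lambda>n. exp (\<alpha> * xs n $ i0)) \<longlonglongrightarrow> exp (\<alpha> * x $ i0)"
      by (intro tendsto_intros xl)
    from convergent_imp_Bseq[OF convergentI[OF this]] obtain B where B: "\<forall>n. norm (exp (\<alpha> * xs n $ i0)) \<le> B"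
      by (auto elim: BseqE)
    have "\<bar>c n k\<bar> \<le> B / exp (\<alpha> * X k $ i0)" for n
    proof -
      have "c n k * exp (\<alpha> * X k $ i0) \<le> (\<Sum>k<l. c n k * exp (\<alpha> * (X k $ i0)))"
        using c3 k by (intro term_le_sum) auto
      also have "\<dots> \<le> exp (\<alpha> * xs n $ i0)"
        using c5[of n i0] True by (auto simp: zero_le_mult_iff)
      also have "\<dots> \<le> B" using B by auto
      finally have "c n k * exp (\<alpha> * X k $ i0) \<le> B" .
      then show ?thesis using c3[of k n] k by (simp add: pos_le_divide_eq)
    qed
    then show ?thesis unfolding bounded_real by blast
  next
    case False
    then have n: "\<alpha> < 0" using a by simp
    fix j0
    have "(\<lambda>n. exp (\<alpha> * ys n $ j0)) \<longlonglongrightarrow> exp (\<alpha> * y $ j0)"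
      by (intro tendsto_intros yl)
    from convergent_imp_Bseq[OF convergentI[OF this]] obtain B where B: "\<forall>n. norm (exp (\<alpha> * ys n $ j0)) \<le> B"
      by (auto elim: BseqE)
    have "\<bar>c n k\<bar> \<le> B / exp (\<alpha> * Y k $ j0)" for n
    proof -
      have "c n k * exp (\<alpha> * Y k $ j0) \<le> (\<Sum>k<l. c n k * exp (\<alpha> * (Y k $ j0)))"
        using c3 k by (intro term_le_sum) auto
      also have "\<dots> \<le> exp (\<alpha> * ys n $ j0)"
        using c6[of n j0] n by (auto simp: zero_le_mult_iff)
      also have "\<dots> \<le> B" using B by auto
      finally have "c n k * exp (\<alpha> * Y k $ j0) \<le> B" .
      then show ?thesis using c3[of k n] k by (simp add: pos_le_divide_eq)
    qed
    then show ?thesis unfolding bounded_real by blast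
  qed
  have "\<forall>d\<subseteq>{..<l}. \<exists>c0::nat\<Rightarrow>real. \<exists>r::nat\<Rightarrow>nat.
    strict_mono r \<and> (\<forall>e>0. eventually (\<lambda>n. \<forall>i\<in>d. dist (c (r n) i) (c0 i) < e) sequentially)"
    by (rule compact_lemma_general[where proj="\<lambda>g k. g k" and unproj="\<lambda>g. g"]) (use bnd in auto)
  then obtain c0 r where r: "strict_mono r"
    and ev: "\<forall>e>0. eventually (\<lambda>n. \<forall>i\<in>{..<l}. dist (c (r n) i) (c0 i) < e) sequentially"
    by blast
  have cl: "(\<lambda>n. c (r n) k) \<longlonglongrightarrow> c0 k" if "k \<in> {..<l}" for k
    unfolding tendsto_iff
  proof (intro allI impI)
    fix e :: real assume "e > 0"
    have "eventually (\<lambda>n. \<forall>i\<in>{..<l}. dist (c (r n) i) (c0 i) < e) sequentially"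
      by (rule ev[rule_format, OF \<open>e > 0\<close>])
    then show "eventually (\<lambda>n. dist (c (r n) k) (c0 k) < e) sequentially"
      by (rule eventually_mono) (use that in blast)
  qed
  have xl': "(\<lambda>n. xs (r n) $ i) \<longlonglongrightarrow> x $ i" for i
    using LIMSEQ_subseq_LIMSEQ[OF xl r] by (simp add: o_def)
  have yl': "(\<lambda>n. ys (r n) $ j) \<longlonglongrightarrow> y $ j" for j
    using LIMSEQ_subseq_LIMSEQ[OF yl r] by (simp add: o_def)
  have A: "0 \<le> x $ i" for i
    by (rule LIMSEQ_le_const[OF xl']) (use c1 in auto)
  have B: "0 \<le> y $ j" for j
    by (rule LIMSEQ_le_const[OF yl']) (use c2 in auto)
  have C: "\<forall>k<l. 0 \<le> c0 k"
  proof (intro allI impI)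
    fix k assume "k < l"
    show "0 \<le> c0 k" by (rule LIMSEQ_le_const[OF cl]) (use \<open>k < l\<close> c3 in auto)
  qed
  have D: "V \<longrightarrow> (\<Sum>k<l. c0 k) = 1"
  proof
    assume V
    have "(\<lambda>n. \<Sum>k<l. c (r n) k) \<longlonglongrightarrow> (\<Sum>k<l. c0 k)" by (intro tendsto_sum cl)
    moreover have "(\<lambda>n. \<Sum>k<l. c (r n) k) = (\<lambda>n. 1)" using c4 \<open>V\<close> by auto
    ultimately show "(\<Sum>k<l. c0 k) = 1" using LIMSEQ_unique LIMSEQ_const_iff by metis
  qed
  have E: "0 \<le> \<alpha> * (exp (\<alpha> * x $ i) - (\<Sum>k<l. c0 k * exp (\<alpha> * (X k $ i))))" for i
  proof (rule LIMSEQ_le_const)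
    show "(\<lambda>n. \<alpha> * (exp (\<alpha> * xs (r n) $ i) - (\<Sum>k<l. c (r n) k * exp (\<alpha> * (X k $ i)))))
      \<longlonglongrightarrow> \<alpha> * (exp (\<alpha> * x $ i) - (\<Sum>k<l. c0 k * exp (\<alpha> * (X k $ i))))"
    proof (intro tendsto_mult tendsto_const tendsto_diff tendsto_exp xl')
      show "(\<lambda>n. \<Sum>k<l. c (r n) k * exp (\<alpha> * X k $ i)) \<longlonglongrightarrow> (\<Sum>k<l. c0 k * exp (\<alpha> * X k $ i))"
        by (rule tendsto_sum, rule tendsto_mult[OF cl tendsto_const])
    qed
  qed (use c5 in auto)
  have F: "0 \<le> \<alpha> * ((\<Sum>k<l. c0 k * exp (\<alpha> * (Y k $ j))) - exp (\<alpha> * y $ j))" for j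
  proof (rule LIMSEQ_le_const)
    show "(\<lambda>n. \<alpha> * ((\<Sum>k<l. c (r n) k * exp (\<alpha> * (Y k $ j))) - exp (\<alpha> * ys (r n) $ j)))
      \<longlonglongrightarrow> \<alpha> * ((\<Sum>k<l. c0 k * exp (\<alpha> * (Y k $ j))) - exp (\<alpha> * y $ j))"
    proof (intro tendsto_mult tendsto_const tendsto_diff tendsto_exp yl')
      show "(\<lambda>n. \<Sum>k<l. c (r n) k * exp (\<alpha> * Y k $ j)) \<longlonglongrightarrow> (\<Sum>k<l. c0 k * exp (\<alpha> * Y k $ j))"
        by (rule tendsto_sum, rule tendsto_mult[OF cl tendsto_const])
    qed
  qed (use c6 in auto)
  show "p \<in> G \<alpha> l X Y V" unfolding pxy G_def
    using A B C D E F by blast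
qed

theorem mainTheorem3:
  fixes \<alpha> :: real and l :: nat
    and X :: "nat \<Rightarrow> real^'m" and Y :: "nat \<Rightarrow> real^'n"
  assumes "\<alpha> \<noteq> 0"
    and "\<forall>k<l. (\<forall>i. 0 \<le> X k $ i) \<and> (\<forall>j. 0 \<le> Y k $ j)"
  shows "(closed (TQC \<alpha> l X Y) \<and> closed (TQV \<alpha> l X Y))
    \<and> (qconvex \<alpha> (TQC \<alpha> l X Y) \<and> qconvex \<alpha> (TQV \<alpha> l X Y))
    \<and> (free_disposal (TQC \<alpha> l X Y) \<and> free_disposal (TQV \<alpha> l X Y))
    \<and> graph_translation_homothetic (TQC \<alpha> l X Y)"
  unfolding TQC_G[OF assms(1)] TQV_G[OF assms(1)]
  using G_closed[OF assms(1)] G_qconvex[OF assms(1)] G_fd G_gth by blast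

end
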